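(* A finite simple graph $G$ is a circular-arc graph if and only if $V(G)$ admits a linear ordering $\le$ with no four distinct vertices $w_1<w_2<w_3<w_4$ satisfying either ($w_1w_3\in E(G)$, $w_1w_2\notin E(G)$ and $w_3w_4\notin E(G)$) or ($w_2w_4\in E(G)$, $w_2w_3\notin E(G)$ and $w_1w_4\notin E(G)$).
   Context: A circular-arc graph is the intersection graph of a finite family of arcs of a circle. (In the paper this forbidden family is denoted $L(CA)$: the linearly ordered graphs on four vertices whose circular closure is represented by the circular pattern with circularly consecutive vertices $v_1,v_2,v_3,v_4$, required edge $v_2v_4$ and required non-edges $v_1v_4$, $v_2v_3$.) *)

theory Defs
  imports Complex_Main
begin

definition simple_graph :: "'a set \<Rightarrow> ('a \<Rightarrow> 'a \<Rightarrow> bool) \<Rightarrow> bool" where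
  "simple_graph V E \<longleftrightarrow> finite V \<and> (\<forall>u v. E u v \<longrightarrow> u \<in> V \<and> v \<in> V)
     \<and> (\<forall>u v. E u v \<longrightarrow> E v u) \<and> (\<forall>v. \<not> E v v)"

text \<open>A (closed) arc of the unit circle in the complex plane, from angle a to angle b
  counterclockwise; a \<le> b \<le> a + 2 pi (the whole circle and single points allowed).\<close>
definition is_arc :: "complex set \<Rightarrow> bool" where
  "is_arc A \<longleftrightarrow> (\<exists>a b::real. a \<le> b \<and> b \<le> a + 2 * pi \<and> A = {cis t | t. a \<le> t \<and> t \<le> b})"

definition circular_arc_graph :: "'a set \<Rightarrow> ('a \<Rightarrow> 'a \<Rightarrow> bool) \<Rightarrow> bool" where
  "circular_arc_graph V E \<longleftrightarrow> (\<exists>f :: 'a \<Rightarrow> complex set.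
     (\<forall>v\<in>V. is_arc (f v)) \<and>
     (\<forall>u\<in>V. \<forall>v\<in>V. u \<noteq> v \<longrightarrow> (E u v \<longleftrightarrow> f u \<inter> f v \<noteq> {})))"

definition forbidden_pattern :: "('a \<Rightarrow> 'a \<Rightarrow> bool) \<Rightarrow> 'a \<Rightarrow> 'a \<Rightarrow> 'a \<Rightarrow> 'a \<Rightarrow> bool" where
  "forbidden_pattern E w1 w2 w3 w4 \<longleftrightarrow>
     (E w1 w3 \<and> \<not> E w1 w2 \<and> \<not> E w3 w4) \<or> (E w2 w4 \<and> \<not> E w2 w3 \<and> \<not> E w1 w4)"

end

theory Submission imports Defs begin

definition cov :: "real \<Rightarrow> real \<Rightarrow> real \<Rightarrow> bool" where
  "cov a b a' \<longleftrightarrow> (a \<le> a' \<and> a' \<le> b) \<or> a' + 2*pi \<le> b"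

definition arcset :: "real \<Rightarrow> real \<Rightarrow> complex set" where
  "arcset a b = {cis t | t. a \<le> t \<and> t \<le> b}"

lemma cis_eq_imp:
  assumes "cis x = cis y" shows "\<exists>n::int. x = y + of_int n * (2*pi)"
proof -
  have "cis (x - y) = 1" using assms by (simp add: cis_divide[symmetric])
  then have "cos (x - y) = 1" by (metis cis.sel(1) one_complex.sel(1))
  then obtain n :: int where "x - y = real_of_int n * 2 * pi" using cos_one_2pi_int[of "x-y"] by blast
  then show ?thesis by (intro exI[of _ n]) (simp add: algebra_simps)
qed

lemma cis_shift: "cis (x + of_int n * (2*pi)) = cis x"
proof -
  have "cis (of_int n * (2*pi)) = 1"
    using cis_power_int[of "2*pi" n] by simp
  then show ?thesis by (simp add: cis_mult[symmetric])
qed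

lemma shift_cov:
  fixes k :: int
  assumes "0 \<le> a" "a < 2*pi" "0 \<le> a'" "a' < 2*pi" "b \<le> a + 2*pi"
    "a \<le> a' + k*(2*pi)" "a' + k*(2*pi) \<le> b"
  shows "cov a b a'"
proof -
  have "real_of_int k * (2*pi) > -1 * (2*pi)" using assms by linarith
  then have "real_of_int k > -1" using pi_gt_zero by (simp only: mult_less_cancel_right)
  then have k1: "k \<ge> 0" by linarith
  have "real_of_int k * (2*pi) < 2 * (2*pi)" using assms by linarith
  then have "real_of_int k < 2" using pi_gt_zero by (simp only: mult_less_cancel_right)
  then have "k \<le> 1" by linarith
  with k1 have "k = 0 \<or> k = 1" by linarith
  then show ?thesis using assms unfolding cov_def by auto
qed

lemma cov_nonempty:
  assumes "cov a1 b1 a2" "a1 < 2*pi" "a2 \<le> b2" "0 \<le> a2"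
  shows "arcset a1 b1 \<inter> arcset a2 b2 \<noteq> {}"
proof (cases "a1 \<le> a2 \<and> a2 \<le> b1")
  case True
  then have "cis a2 \<in> arcset a1 b1 \<inter> arcset a2 b2" using assms unfolding arcset_def by auto
  then show ?thesis by blast
next
  case False
  then have b: "a2 + 2*pi \<le> b1" using assms unfolding cov_def by auto
  have e: "cis a2 = cis (a2 + 2*pi)" using cis_shift[of a2 1] by simp
  have "cis a2 \<in> arcset a1 b1"
    unfolding arcset_def using b assms e pi_gt_zero
    by (intro CollectI exI[of _ "a2 + 2*pi"]) (auto simp del: of_int_1)
  moreover have "cis a2 \<in> arcset a2 b2" unfolding arcset_def using assms by auto
  ultimately show ?thesis by blast
qed

lemma arcs_intersect:
  assumes "0 \<le> a1" "a1 < 2*pi" "a1 \<le> b1" "b1 \<le> a1 + 2*pi"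
    "0 \<le> a2" "a2 < 2*pi" "a2 \<le> b2" "b2 \<le> a2 + 2*pi"
  shows "arcset a1 b1 \<inter> arcset a2 b2 \<noteq> {} \<longleftrightarrow> cov a1 b1 a2 \<or> cov a2 b2 a1"
proof
  assume "arcset a1 b1 \<inter> arcset a2 b2 \<noteq> {}"
  then obtain t1 t2 where t: "a1 \<le> t1" "t1 \<le> b1" "a2 \<le> t2" "t2 \<le> b2" "cis t1 = cis t2"
    unfolding arcset_def by auto
  then obtain n :: int where n: "t1 = t2 + n * (2*pi)" using cis_eq_imp by blast
  show "cov a1 b1 a2 \<or> cov a2 b2 a1"
  proof (cases "a1 \<ge> a2 + n*(2*pi)")
    case True
    have "cov a2 b2 a1"
      by (rule shift_cov[where k="-n"]) (use assms t n True in auto)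
    then show ?thesis by simp
  next
    case False
    have "cov a1 b1 a2"
      by (rule shift_cov[where k="n"]) (use assms t n False in auto)
    then show ?thesis by simp
  qed
next
  assume "cov a1 b1 a2 \<or> cov a2 b2 a1"
  then show "arcset a1 b1 \<inter> arcset a2 b2 \<noteq> {}"
    using cov_nonempty[of a1 b1 a2 b2] cov_nonempty[of a2 b2 a1 b1] assms by blast
qed


lemma hard_dir:
  assumes G: "simple_graph V E" and L: "linear_order_on V R"
    and NP: "\<not> (\<exists>w1\<in>V. \<exists>w2\<in>V. \<exists>w3\<in>V. \<exists>w4\<in>V.
            distinct [w1, w2, w3, w4] \<and>
            (w1, w2) \<in> R \<and> (w2, w3) \<in> R \<and> (w3, w4) \<in> R \<and>
            forbidden_pattern E w1 w2 w3 w4)"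
  shows "circular_arc_graph V E"
proof -
  have finV: "finite V" and Esym: "\<And>u v. E u v \<Longrightarrow> E v u" and Eirr: "\<And>v. \<not> E v v"
    using G unfolding simple_graph_def by auto
  have RV: "\<And>u v. (u,v) \<in> R \<Longrightarrow> u \<in> V \<and> v \<in> V"
    and Rrefl: "\<And>v. v \<in> V \<Longrightarrow> (v,v) \<in> R"
    and Rtrans: "\<And>u v w. (u,v) \<in> R \<Longrightarrow> (v,w) \<in> R \<Longrightarrow> (u,w) \<in> R"
    and Ranti: "\<And>u v. (u,v) \<in> R \<Longrightarrow> (v,u) \<in> R \<Longrightarrow> u = v"
    and Rtot: "\<And>u v. u \<in> V \<Longrightarrow> v \<in> V \<Longrightarrow> u \<noteq> v \<Longrightarrow> (u,v) \<in> R \<or> (v,u) \<in> R"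
    using L unfolding linear_order_on_def partial_order_on_def preorder_on_def refl_on_def
      trans_def antisym_def total_on_def by blast+
  define rank where "rank v = card {w\<in>V. (w,v) \<in> R \<and> w \<noteq> v}" for v
  define N where "N = card V"
  define pos where "pos v = 2 * pi * real (rank v) / real N" for v
  have rank_mono: "rank u < rank v" if "(u,v) \<in> R" "u \<noteq> v" for u v
  proof -
    have "{w\<in>V. (w,u) \<in> R \<and> w \<noteq> u} \<subset> {w\<in>V. (w,v) \<in> R \<and> w \<noteq> v}"
      using that RV Rtrans Ranti by blast
    then show ?thesis unfolding rank_def by (rule psubset_card_mono[rotated]) (use finV in auto)
  qed
  have rank_lt: "rank v < N" if "v \<in> V" for v
  proof -
    have "{w\<in>V. (w,v) \<in> R \<and> w \<noteq> v} \<subset> V" using that by blast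
    then show ?thesis unfolding rank_def N_def using finV by (simp add: psubset_card_mono)
  qed
  have pos_mono: "pos u < pos v" if "(u,v) \<in> R" "u \<noteq> v" for u v
  proof -
    have "N > 0" using rank_lt[of v] RV that by auto
    then show ?thesis unfolding pos_def using rank_mono[OF that]
      by (simp add: divide_strict_right_mono)
  qed
  have pos_range: "0 \<le> pos v \<and> pos v < 2*pi" if "v \<in> V" for v
  proof -
    have "real (rank v) < real N" using rank_lt[OF that] by simp
    moreover have "N > 0" using rank_lt[OF that] by auto
    ultimately have "real (rank v) / real N < 1" by simp
    then have "2*pi * (real (rank v) / real N) < 2*pi * 1" using pi_gt_zero
      by (intro mult_strict_left_mono) auto
    then show ?thesis unfolding pos_def by simp
  qed
  have pos_le: "(u,v) \<in> R" if "u \<in> V" "v \<in> V" "pos u \<le> pos v" for u v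
    using that Rtot[of u v] Rrefl pos_mono[of v u] by fastforce
  define run where "run u v \<longleftrightarrow> (\<forall>w\<in>V. (u,w) \<in> R \<and> (w,v) \<in> R \<and> w \<noteq> u \<longrightarrow> E u w)" for u v
  define wrap where "wrap u \<longleftrightarrow> (\<forall>w\<in>V. (u,w) \<in> R \<and> w \<noteq> u \<longrightarrow> E u w)" for u
  define S1 where "S1 u = pos ` {v\<in>V. (u,v) \<in> R \<and> run u v}" for u
  define S2 where "S2 u = (\<lambda>v. pos v + 2*pi) ` {v\<in>V. (v,u) \<in> R \<and> v \<noteq> u \<and> wrap u \<and>
                          (\<forall>w\<in>V. (w,v) \<in> R \<longrightarrow> E u w)}" for u
  define e where "e u = Max (S1 u \<union> S2 u)" for u
  have finS: "finite (S1 u \<union> S2 u)" for u unfolding S1_def S2_def using finV by auto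
  have posS1: "pos u \<in> S1 u" if "u \<in> V" for u
    unfolding S1_def run_def using that Rrefl Ranti by blast
  have e_in: "e u \<in> S1 u \<union> S2 u" if "u \<in> V" for u
    unfolding e_def using finS posS1[OF that] by (intro Max_in) auto
  have e_ge: "x \<le> e u" if "x \<in> S1 u \<union> S2 u" for x u
    unfolding e_def using finS that by simp
  have S1_bd: "x < 2*pi" if "x \<in> S1 u" for x u
    using that pos_range unfolding S1_def by auto
  have e_bounds: "pos u \<le> e u \<and> e u \<le> pos u + 2*pi" if "u \<in> V" for u
  proof
    show "pos u \<le> e u" using e_ge posS1[OF that] by blast
    have "e u \<in> S1 u \<union> S2 u" using e_in[OF that] .
    then show "e u \<le> pos u + 2*pi"
    proof
      assume "e u \<in> S1 u" then show ?thesis using S1_bd pos_range[OF that] by fastforce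
    next
      assume "e u \<in> S2 u" then show ?thesis unfolding S2_def using pos_mono by fastforce
    qed
  qed
  have L1: "(pos v \<le> e u \<longleftrightarrow> run u v) \<and> \<not> (pos v + 2*pi \<le> e u)"
    if "u \<in> V" "v \<in> V" "(u,v) \<in> R" "u \<noteq> v" for u v
  proof (intro conjI)
    show "pos v \<le> e u \<longleftrightarrow> run u v"
    proof
      assume "run u v" then have "pos v \<in> S1 u" unfolding S1_def using that by blast
      then show "pos v \<le> e u" using e_ge by blast
    next
      assume le: "pos v \<le> e u"
      have "e u \<in> S1 u \<union> S2 u" using e_in[OF that(1)] .
      then show "run u v"
      proof
        assume "e u \<in> S1 u"
        then obtain v' where v': "v' \<in> V" "run u v'" "e u = pos v'" unfolding S1_def by blast
        then have "(v,v') \<in> R" using pos_le[of v v'] le that by simp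
        then show ?thesis using v'(2) Rtrans unfolding run_def by blast
      next
        assume "e u \<in> S2 u"
        then have "wrap u" unfolding S2_def by blast
        then show ?thesis unfolding run_def wrap_def by blast
      qed
    qed
    have "e u \<in> S1 u \<union> S2 u" using e_in[OF that(1)] .
    then show "\<not> (pos v + 2*pi \<le> e u)"
    proof
      assume "e u \<in> S1 u" then show ?thesis using S1_bd pos_range[OF that(2)] by fastforce
    next
      assume "e u \<in> S2 u"
      then obtain v' where "v' \<in> V" "(v',u) \<in> R" "v' \<noteq> u" "e u = pos v' + 2*pi" unfolding S2_def by blast
      then show ?thesis using pos_mono[of v' u] pos_mono[OF that(3,4)] by simp
    qed
  qed
  have L2: "pos v + 2*pi \<le> e u \<longleftrightarrow> wrap u \<and> (\<forall>w\<in>V. (w,v) \<in> R \<longrightarrow> E u w)"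
    if "u \<in> V" "v \<in> V" "(v,u) \<in> R" "u \<noteq> v" for u v
  proof
    assume "wrap u \<and> (\<forall>w\<in>V. (w,v) \<in> R \<longrightarrow> E u w)"
    then have "pos v + 2*pi \<in> S2 u" unfolding S2_def using that by blast
    then show "pos v + 2*pi \<le> e u" using e_ge by blast
  next
    assume le: "pos v + 2*pi \<le> e u"
    have "e u \<in> S1 u \<union> S2 u" using e_in[OF that(1)] .
    then show "wrap u \<and> (\<forall>w\<in>V. (w,v) \<in> R \<longrightarrow> E u w)"
    proof
      assume "e u \<in> S1 u" then show ?thesis using S1_bd pos_range[OF that(2)] le by fastforce
    next
      assume "e u \<in> S2 u"
      then obtain v' where v': "v' \<in> V" "wrap u" "\<forall>w\<in>V. (w,v') \<in> R \<longrightarrow> E u w" "e u = pos v' + 2*pi"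
        unfolding S2_def by blast
      then have "(v,v') \<in> R" using pos_le[of v v'] le that by simp
      then show ?thesis using v' Rtrans by blast
    qed
  qed
  have comb: "E u v \<longleftrightarrow> run u v \<or> (wrap v \<and> (\<forall>w\<in>V. (w,u) \<in> R \<longrightarrow> E v w))"
    if "u \<in> V" "v \<in> V" "(u,v) \<in> R" "u \<noteq> v" for u v
  proof
    assume "run u v \<or> (wrap v \<and> (\<forall>w\<in>V. (w,u) \<in> R \<longrightarrow> E v w))"
    then show "E u v" unfolding run_def using that Rrefl Esym by blast
  next
    assume Euv: "E u v"
    show "run u v \<or> (wrap v \<and> (\<forall>w\<in>V. (w,u) \<in> R \<longrightarrow> E v w))"
    proof (cases "run u v")
      case False
      then obtain w where w: "w \<in> V" "(u,w) \<in> R" "(w,v) \<in> R" "w \<noteq> u" "\<not> E u w"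
        unfolding run_def by blast
      have wv: "w \<noteq> v" using w Euv by blast
      have "wrap v"
        unfolding wrap_def
      proof (intro ballI impI)
        fix l assume l: "l \<in> V" "(v,l) \<in> R \<and> l \<noteq> v"
        have "l \<noteq> u" "l \<noteq> w" using l that w wv Ranti Rtrans by blast+
        show "E v l"
        proof (rule ccontr)
          assume "\<not> E v l"
          then show False using NP that w wv l \<open>l \<noteq> u\<close> \<open>l \<noteq> w\<close> Euv
            unfolding forbidden_pattern_def by (metis distinct_length_2_or_more distinct_singleton)
        qed
      qed
      moreover have "\<forall>m\<in>V. (m,u) \<in> R \<longrightarrow> E v m"
      proof (intro ballI impI)
        fix m assume m: "m \<in> V" "(m,u) \<in> R"
        show "E v m"
        proof (cases "m = u")
          case True then show ?thesis using Euv Esym by blast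
        next
          case False
          have "m \<noteq> w" "m \<noteq> v" using m False that w wv Ranti Rtrans by blast+
          show ?thesis
          proof (rule ccontr)
            assume "\<not> E v m"
            then have "\<not> E m v" using Esym by blast
            then show False using NP that w wv m False \<open>m \<noteq> w\<close> \<open>m \<noteq> v\<close> Euv
              unfolding forbidden_pattern_def by (metis distinct_length_2_or_more distinct_singleton)
          qed
        qed
      qed
      ultimately show ?thesis by blast
    qed simp
  qed
  define f where "f u = arcset (pos u) (e u)" for u
  have key: "E u v \<longleftrightarrow> f u \<inter> f v \<noteq> {}"
    if "u \<in> V" "v \<in> V" "(u,v) \<in> R" "u \<noteq> v" for u v
  proof -
    have "f u \<inter> f v \<noteq> {} \<longleftrightarrow> cov (pos u) (e u) (pos v) \<or> cov (pos v) (e v) (pos u)"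
      unfolding f_def using pos_range e_bounds that by (intro arcs_intersect) auto
    also have "cov (pos u) (e u) (pos v) \<longleftrightarrow> run u v"
      unfolding cov_def using L1[OF that] pos_mono[OF that(3,4)] by auto
    also have "cov (pos v) (e v) (pos u) \<longleftrightarrow> wrap v \<and> (\<forall>w\<in>V. (w,u) \<in> R \<longrightarrow> E v w)"
      unfolding cov_def using L2[of v u] that pos_mono[OF that(3,4)] by auto
    finally show ?thesis using comb[OF that] by simp
  qed
  show ?thesis
    unfolding circular_arc_graph_def
  proof (intro exI[of _ f] conjI ballI impI)
    fix v assume "v \<in> V"
    then show "is_arc (f v)" unfolding is_arc_def f_def arcset_def
      using e_bounds[of v] by (intro exI[of _ "pos v"] exI[of _ "e v"]) auto
  next
    fix u v assume uv: "u \<in> V" "v \<in> V" "u \<noteq> v"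
    show "E u v \<longleftrightarrow> f u \<inter> f v \<noteq> {}"
    proof (cases "(u,v) \<in> R")
      case True then show ?thesis using key uv by blast
    next
      case False
      then have "(v,u) \<in> R" using Rtot uv by blast
      then show ?thesis using key[of v u] uv Esym by blast
    qed
  qed
qed


lemma arcset_shift: "arcset (a - of_int n * (2*pi)) (b - of_int n * (2*pi)) = arcset a b"
proof
  show "arcset (a - of_int n * (2*pi)) (b - of_int n * (2*pi)) \<subseteq> arcset a b"
  proof
    fix z assume "z \<in> arcset (a - of_int n * (2*pi)) (b - of_int n * (2*pi))"
    then obtain t where t: "z = cis t" "a - of_int n * (2*pi) \<le> t" "t \<le> b - of_int n * (2*pi)"
      unfolding arcset_def by blast
    have "z = cis (t + of_int n * (2*pi))" using t cis_shift by simp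
    moreover have "a \<le> t + of_int n * (2*pi)" "t + of_int n * (2*pi) \<le> b" using t by linarith+
    ultimately show "z \<in> arcset a b" unfolding arcset_def by blast
  qed
  show "arcset a b \<subseteq> arcset (a - of_int n * (2*pi)) (b - of_int n * (2*pi))"
  proof
    fix z assume "z \<in> arcset a b"
    then obtain t where t: "z = cis t" "a \<le> t" "t \<le> b" unfolding arcset_def by blast
    have "cis (t - of_int n * (2*pi) + of_int n * (2*pi)) = cis (t - of_int n * (2*pi))"
      by (rule cis_shift)
    then have "z = cis (t - of_int n * (2*pi))" using t by simp
    then show "z \<in> arcset (a - of_int n * (2*pi)) (b - of_int n * (2*pi))"
      unfolding arcset_def using t by (intro CollectI exI[of _ "t - of_int n * (2*pi)"]) auto
  qed
qed

lemma easy_dir: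
  assumes G: "simple_graph V E" and CA: "circular_arc_graph V E"
  shows "\<exists>R. linear_order_on V R \<and>
      \<not> (\<exists>w1\<in>V. \<exists>w2\<in>V. \<exists>w3\<in>V. \<exists>w4\<in>V.
            distinct [w1, w2, w3, w4] \<and>
            (w1, w2) \<in> R \<and> (w2, w3) \<in> R \<and> (w3, w4) \<in> R \<and>
            forbidden_pattern E w1 w2 w3 w4)"
proof -
  have finV: "finite V" using G unfolding simple_graph_def by auto
  obtain f where f: "\<forall>v\<in>V. is_arc (f v)"
    "\<forall>u\<in>V. \<forall>v\<in>V. u \<noteq> v \<longrightarrow> (E u v \<longleftrightarrow> f u \<inter> f v \<noteq> {})"
    using CA unfolding circular_arc_graph_def by blast
  have "\<forall>v\<in>V. \<exists>ab. fst ab \<le> snd ab \<and> snd ab \<le> fst ab + 2*pi \<and> f v = arcset (fst ab) (snd ab)"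
    using f(1) unfolding is_arc_def arcset_def by force
  then obtain ab where ab: "\<And>v. v \<in> V \<Longrightarrow> fst (ab v) \<le> snd (ab v) \<and> snd (ab v) \<le> fst (ab v) + 2*pi
      \<and> f v = arcset (fst (ab v)) (snd (ab v))"
    by metis
  define k where "k v = \<lfloor>fst (ab v) / (2*pi)\<rfloor>" for v
  define A where "A v = fst (ab v) - of_int (k v) * (2*pi)" for v
  define B where "B v = snd (ab v) - of_int (k v) * (2*pi)" for v
  have AB: "0 \<le> A v \<and> A v < 2*pi \<and> A v \<le> B v \<and> B v \<le> A v + 2*pi \<and> f v = arcset (A v) (B v)"
    if "v \<in> V" for v
  proof -
    have p: "2*pi > (0::real)" by simp
    have "of_int (k v) * (2*pi) \<le> fst (ab v)" unfolding k_def by (rule floor_divide_lower[OF p])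
    moreover have "fst (ab v) < (of_int (k v) + 1) * (2*pi)" unfolding k_def by (rule floor_divide_upper[OF p])
    ultimately show ?thesis unfolding A_def B_def using ab[OF that] arcset_shift
      by (auto simp: algebra_simps)
  qed
  have inter: "E u v \<longleftrightarrow> cov (A u) (B u) (A v) \<or> cov (A v) (B v) (A u)"
    if "u \<in> V" "v \<in> V" "u \<noteq> v" for u v
    using f(2) that AB[OF that(1)] AB[OF that(2)] arcs_intersect[of "A u" "B u" "A v" "B v"] by auto
  obtain g :: "'a \<Rightarrow> nat" and n where g: "inj_on g V" using finite_imp_inj_to_nat_seg[OF finV] by blast
  define R where "R = {(u,v). u \<in> V \<and> v \<in> V \<and> (A u < A v \<or> (A u = A v \<and> g u \<le> g v))}"
  have lin: "linear_order_on V R"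
    unfolding linear_order_on_def partial_order_on_def preorder_on_def refl_on_def
      trans_def antisym_def total_on_def R_def
    using g by (auto simp: inj_on_def)
  have RA: "A u \<le> A v" if "(u,v) \<in> R" for u v using that unfolding R_def by auto
  have nopat: False
    if w: "w1 \<in> V" "w2 \<in> V" "w3 \<in> V" "w4 \<in> V" "distinct [w1, w2, w3, w4]"
      "(w1, w2) \<in> R" "(w2, w3) \<in> R" "(w3, w4) \<in> R" "forbidden_pattern E w1 w2 w3 w4"
    for w1 w2 w3 w4
  proof -
    have o: "A w1 \<le> A w2" "A w2 \<le> A w3" "A w3 \<le> A w4" using RA w by auto
    have i12: "E w1 w2 \<longleftrightarrow> cov (A w1) (B w1) (A w2) \<or> cov (A w2) (B w2) (A w1)"
      using inter w by simp
    have i13: "E w1 w3 \<longleftrightarrow> cov (A w1) (B w1) (A w3) \<or> cov (A w3) (B w3) (A w1)"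
      using inter w by simp
    have i34: "E w3 w4 \<longleftrightarrow> cov (A w3) (B w3) (A w4) \<or> cov (A w4) (B w4) (A w3)"
      using inter w by simp
    have i24: "E w2 w4 \<longleftrightarrow> cov (A w2) (B w2) (A w4) \<or> cov (A w4) (B w4) (A w2)"
      using inter w by simp
    have i23: "E w2 w3 \<longleftrightarrow> cov (A w2) (B w2) (A w3) \<or> cov (A w3) (B w3) (A w2)"
      using inter w by simp
    have i14: "E w1 w4 \<longleftrightarrow> cov (A w1) (B w1) (A w4) \<or> cov (A w4) (B w4) (A w1)"
      using inter w by simp
    note bds = AB[OF w(1)] AB[OF w(2)] AB[OF w(3)] AB[OF w(4)]
    from w(9) show False
      unfolding forbidden_pattern_def
    proof
      assume p: "E w1 w3 \<and> \<not> E w1 w2 \<and> \<not> E w3 w4"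
      then show False using i12 i13 i34 o bds unfolding cov_def by auto
    next
      assume p: "E w2 w4 \<and> \<not> E w2 w3 \<and> \<not> E w1 w4"
      then show False using i24 i23 i14 o bds unfolding cov_def by auto
    qed
  qed
  show ?thesis using lin nopat by blast
qed

theorem proposition4:
  fixes V :: "'a set" and E :: "'a \<Rightarrow> 'a \<Rightarrow> bool"
  assumes "simple_graph V E"
  shows "circular_arc_graph V E \<longleftrightarrow>
    (\<exists>R. linear_order_on V R \<and>
      \<not> (\<exists>w1\<in>V. \<exists>w2\<in>V. \<exists>w3\<in>V. \<exists>w4\<in>V.
            distinct [w1, w2, w3, w4] \<and>
            (w1, w2) \<in> R \<and> (w2, w3) \<in> R \<and> (w3, w4) \<in> R \<and>
            forbidden_pattern E w1 w2 w3 w4))"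
  using easy_dir[OF assms] hard_dir[OF assms] by blast

end
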